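(* Let $A$ be an abelian topological group such that $\alpha_A$ is injective, and let $K$ be a compact subgroup of $A$. Then $K$ is dually closed in $A$ (i.e. $K^{\vartriangleright\vartriangleleft}=K$) and dually embedded in $A$ (i.e. every continuous character of $K$ extends to a continuous character of $A$).
   Context: $\mathbb{T}=\mathbb{R}/\mathbb{Z}$, $\Lambda_1$ is the image of $[-\tfrac14,\tfrac14]$ in $\mathbb{T}$. $\hat A$ is the group of continuous homomorphisms $A\to\mathbb{T}$ with the compact-open topology and $\alpha_A\colon A\to\hat{\hat A}$, $\alpha_A(a)(\chi)=\chi(a)$. For $S\subseteq A$, $S^\vartriangleright=\{\chi\in\hat A\mid\chi(S)\subseteq\Lambda_1\}$; for $\Phi\subseteq\hat A$, $\Phi^\vartriangleleft=\{a\in A\mid\chi(a)\in\Lambda_1\ \forall\chi\in\Phi\}$. *)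

theory Defs
  imports "HOL-Analysis.Analysis"
begin

text \<open>The circle group T = R/Z, realised as the unit circle in the complex plane via
  the topological isomorphism t mod 1 to cis (2 pi t).  Its group operation is complex
  multiplication, with neutral element 1.\<close>

definition circleT :: "complex set" where
  "circleT = {z. cmod z = 1}"

definition Lambda1 :: "complex set" where
  "Lambda1 = (\<lambda>t. cis (2 * pi * t)) ` {-1/4 .. 1/4}"

definition is_subgroup :: "'a::ab_group_add set \<Rightarrow> bool" where
  "is_subgroup K \<longleftrightarrow> 0 \<in> K \<and> (\<forall>x\<in>K. \<forall>y\<in>K. x + y \<in> K) \<and> (\<forall>x\<in>K. - x \<in> K)"

text \<open>Continuous characters of the subgroup S (with the subspace topology) into T.
  Values outside S are irrelevant.\<close>
definition is_char :: "'a::topological_ab_group_add set \<Rightarrow> ('a \<Rightarrow> complex) \<Rightarrow> bool" where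
  "is_char S c \<longleftrightarrow> continuous_on S c \<and> c ` S \<subseteq> circleT \<and>
     (\<forall>x\<in>S. \<forall>y\<in>S. c (x + y) = c x * c y)"

text \<open>The dual group of A (A the whole type).\<close>
definition dual :: "('a::topological_ab_group_add \<Rightarrow> complex) set" where
  "dual = {c. is_char UNIV c}"

definition alpha :: "'a::topological_ab_group_add \<Rightarrow> ('a \<Rightarrow> complex) \<Rightarrow> complex" where
  "alpha a = (\<lambda>c \<in> dual. c a)"

definition polar_r :: "'a::topological_ab_group_add set \<Rightarrow> ('a \<Rightarrow> complex) set" where
  "polar_r S = {c \<in> dual. c ` S \<subseteq> Lambda1}"

definition polar_l :: "('a::topological_ab_group_add \<Rightarrow> complex) set \<Rightarrow> 'a set" where
  "polar_l \<Phi> = {a. \<forall>c\<in>\<Phi>. c a \<in> Lambda1}"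

definition dually_closed :: "'a::topological_ab_group_add set \<Rightarrow> bool" where
  "dually_closed K \<longleftrightarrow> polar_l (polar_r K) = K"

definition dually_embedded :: "'a::topological_ab_group_add set \<Rightarrow> bool" where
  "dually_embedded K \<longleftrightarrow>
     (\<forall>c. is_char K c \<longrightarrow> (\<exists>d\<in>dual. \<forall>x\<in>K. d x = c x))"

end

theory Submission
  imports Defs
begin


typedef ('i, 'b) pfun = "UNIV :: ('i \<Rightarrow> 'b) set" by auto

instantiation pfun :: (type, topological_space) topological_space
begin
definition open_pfun :: "('a, 'b) pfun set \<Rightarrow> bool" where
  "open_pfun U \<longleftrightarrow> open (Abs_pfun -` U)"
instance
proof
  show "open (UNIV :: ('a, 'b) pfun set)" by (simp add: open_pfun_def)
next
  fix S T :: "('a, 'b) pfun set"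
  assume "open S" "open T"
  then show "open (S \<inter> T)" by (simp add: open_pfun_def vimage_Int open_Int)
next
  fix K :: "('a, 'b) pfun set set"
  assume "\<forall>S\<in>K. open S"
  then have h: "\<forall>S\<in>K. open (Abs_pfun -` S)" unfolding open_pfun_def .
  have e: "Abs_pfun -` \<Union>K = (\<Union>S\<in>K. Abs_pfun -` S)" by blast
  have "open (\<Union>S\<in>K. Abs_pfun -` S)" using h by (rule open_UN)
  then show "open (\<Union>K)" unfolding open_pfun_def e .
qed
end

lemma open_vimage_cont: "continuous_on UNIV f \<Longrightarrow> open B \<Longrightarrow> open (f -` B)"
  using continuous_on_open_vimage[OF open_UNIV] by (metis Int_UNIV_right)

lemma open_vimage_Rep_pfun: "open U \<Longrightarrow> open (Rep_pfun -` U)"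
proof -
  assume "open U"
  moreover have "Abs_pfun -` Rep_pfun -` U = U" by (auto simp: Abs_pfun_inverse)
  ultimately show ?thesis by (simp add: open_pfun_def)
qed

lemma continuous_Abs_pfun: "continuous_on S Abs_pfun"
proof -
  have "continuous_on UNIV Abs_pfun"
    by (simp add: continuous_on_open_vimage open_pfun_def)
  then show ?thesis using continuous_on_subset by blast
qed

lemma continuous_Rep_pfun_coord: "continuous_on S (\<lambda>y. Rep_pfun y i)"
proof -
  have "continuous_on UNIV (\<lambda>y. Rep_pfun y i)"
    unfolding continuous_on_open_vimage[OF open_UNIV]
  proof (intro allI impI)
    fix B assume "open B"
    then have "open ((\<lambda>f. f i) -` B)" by (rule open_vimage_cont[OF continuous_on_product_coordinates])
    then have "open (Rep_pfun -` ((\<lambda>f. f i) -` B))" by (rule open_vimage_Rep_pfun)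
    moreover have "Rep_pfun -` ((\<lambda>f. f i) -` B) = (\<lambda>y. Rep_pfun y i) -` B \<inter> UNIV" by auto
    ultimately show "open ((\<lambda>y. Rep_pfun y i) -` B \<inter> UNIV)" by simp
  qed
  then show ?thesis using continuous_on_subset by blast
qed

instance pfun :: (type, t2_space) t2_space
proof
  fix x y :: "('a, 'b) pfun"
  assume "x \<noteq> y"
  then have "Rep_pfun x \<noteq> Rep_pfun y" by (simp add: Rep_pfun_inject)
  then obtain i where "Rep_pfun x i \<noteq> Rep_pfun y i" by (auto simp: fun_eq_iff)
  then obtain U V where UV: "open U" "open V" "Rep_pfun x i \<in> U" "Rep_pfun y i \<in> V" "U \<inter> V = {}"
    using hausdorff[of "Rep_pfun x i" "Rep_pfun y i"] by auto
  have o1: "open ((\<lambda>f. Rep_pfun f i) -` U)" and o2: "open ((\<lambda>f. Rep_pfun f i) -` V)"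
    using open_vimage_cont[OF continuous_Rep_pfun_coord UV(1)] open_vimage_cont[OF continuous_Rep_pfun_coord UV(2)] .
  show "\<exists>U V. open U \<and> open V \<and> x \<in> U \<and> y \<in> V \<and> U \<inter> V = {}"
  proof (intro exI conjI)
    show "x \<in> (\<lambda>f. Rep_pfun f i) -` U" "y \<in> (\<lambda>f. Rep_pfun f i) -` V"
      using UV(3,4) by simp_all
    show "(\<lambda>f. Rep_pfun f i) -` U \<inter> (\<lambda>f. Rep_pfun f i) -` V = {}"
      using UV(5) by (simp add: vimage_Int[symmetric])
  qed (use o1 o2 in auto)
qed

lemma dualD:
  assumes "c \<in> dual"
  shows "continuous_on UNIV c" "cmod (c x) = 1" "c (x + y) = c x * c y"
  using assms by (auto simp: dual_def is_char_def circleT_def)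

lemma dualI:
  assumes "continuous_on UNIV c" "\<And>x. cmod (c x) = 1" "\<And>x y. c (x + y) = c x * c y"
  shows "c \<in> dual"
  using assms by (auto simp: dual_def is_char_def circleT_def)

lemma dual_mult: "c \<in> dual \<Longrightarrow> d \<in> dual \<Longrightarrow> (\<lambda>x. c x * d x) \<in> dual"
  by (rule dualI) (auto simp: dualD norm_mult intro: continuous_intros)

lemma dual_cnj: "c \<in> dual \<Longrightarrow> (\<lambda>x. cnj (c x)) \<in> dual"
  by (rule dualI) (auto simp: dualD intro: continuous_intros)

lemma dual_one: "(\<lambda>x. 1) \<in> dual"
  by (rule dualI) auto

lemma dual_pow: "c \<in> dual \<Longrightarrow> (\<lambda>x. c x ^ m) \<in> dual"
  by (induction m) (auto simp: dual_one dual_mult)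

lemma alpha_app: "c \<in> dual \<Longrightarrow> alpha x c = c x"
  by (simp add: alpha_def)

lemma continuous_alpha0: "continuous_on S (alpha :: 'a::topological_ab_group_add \<Rightarrow> _)"
proof (rule continuous_on_coordinatewise_then_product)
  fix c :: "'a \<Rightarrow> complex"
  show "continuous_on S (\<lambda>x. alpha x c)"
  proof (cases "c \<in> dual")
    case True
    then show ?thesis using dualD(1)[OF True] continuous_on_subset
      by (simp add: alpha_app) blast
  next
    case False
    then show ?thesis by (simp add: alpha_def)
  qed
qed

definition phi :: "'a::topological_ab_group_add \<Rightarrow> ('a \<Rightarrow> complex, complex) pfun" where
  "phi x = Abs_pfun (alpha x)"

lemma continuous_phi: "continuous_on S phi"
  unfolding phi_def
  by (rule continuous_on_compose2[OF continuous_Abs_pfun continuous_alpha0]) auto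

lemma phi_app: "c \<in> dual \<Longrightarrow> Rep_pfun (phi x) c = c x"
  by (simp add: phi_def Abs_pfun_inverse alpha_app)

lemma phi_inj: "inj (alpha :: 'a::topological_ab_group_add \<Rightarrow> _) \<Longrightarrow> inj (phi :: 'a \<Rightarrow> _)"
  unfolding phi_def inj_def by (metis Abs_pfun_inject UNIV_I)

definition comb :: "('a::topological_ab_group_add \<Rightarrow> complex) \<Rightarrow> bool" where
  "comb h \<longleftrightarrow> (\<exists>(n::nat) b e. (\<forall>i<n. e i \<in> dual) \<and> h = (\<lambda>x. \<Sum>i<n. b i * e i x))"

lemma comb_zero: "comb (\<lambda>x. 0)"
  unfolding comb_def by (rule exI[of _ 0]) auto

lemma comb_add_char:
  assumes "comb g" "c \<in> dual"
  shows "comb (\<lambda>x. g x + \<beta> * c x)"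
proof -
  obtain n :: nat and b e where ne: "\<forall>i<n. e i \<in> dual" and g: "g = (\<lambda>x. \<Sum>i<n. b i * e i x)"
    using assms(1) unfolding comb_def by blast
  have "(\<lambda>x. g x + \<beta> * c x) = (\<lambda>x. \<Sum>i<Suc n. (b(n := \<beta>)) i * (e(n := c)) i x)"
    by (auto simp: g intro!: sum.cong)
  moreover have "\<forall>i<Suc n. (e(n := c)) i \<in> dual" using ne assms(2) by (auto simp: less_Suc_eq)
  ultimately show ?thesis unfolding comb_def by blast
qed

lemma comb_char: "c \<in> dual \<Longrightarrow> comb (\<lambda>x. \<beta> * c x)"
  using comb_add_char[OF comb_zero, of c \<beta>] by simp

lemma comb_const: "comb (\<lambda>x. \<beta>)"
  using comb_char[OF dual_one, of \<beta>] by simp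

lemma comb_induct[consumes 1, case_names zero step]:
  assumes "comb h"
    and "P (\<lambda>x. 0)"
    and "\<And>g c \<beta>. P g \<Longrightarrow> comb g \<Longrightarrow> c \<in> dual \<Longrightarrow> P (\<lambda>x. g x + \<beta> * c x)"
  shows "P h"
proof -
  obtain n :: nat and b e where ne: "\<forall>i<n. e i \<in> dual" and h: "h = (\<lambda>x. \<Sum>i<n. b i * e i x)"
    using assms(1) unfolding comb_def by blast
  have "P (\<lambda>x. \<Sum>i<m. b i * e i x) \<and> comb (\<lambda>x. \<Sum>i<m. b i * e i x)" if "m \<le> n" for m
    using that
  proof (induction m)
    case 0
    then show ?case using assms(2) comb_zero by simp
  next
    case (Suc m)
    then have "e m \<in> dual" using ne by auto
    with Suc show ?case using assms(3)[of "\<lambda>x. \<Sum>i<m. b i * e i x" "e m" "b m"]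
      comb_add_char[of "\<lambda>x. \<Sum>i<m. b i * e i x" "e m" "b m"] by simp
  qed
  then show ?thesis using h by simp
qed

lemma comb_add:
  assumes g: "comb g" and h: "comb h"
  shows "comb (\<lambda>x. g x + h x)"
  using h
proof (induction h rule: comb_induct)
  case zero then show ?case using g by simp
next
  case (step g' c \<beta>)
  then have "comb (\<lambda>x. (g x + g' x) + \<beta> * c x)" using comb_add_char by blast
  then show ?case by (simp add: add.assoc)
qed

lemma comb_mult_char: "comb g \<Longrightarrow> c \<in> dual \<Longrightarrow> comb (\<lambda>x. g x * c x)"
proof (induction g rule: comb_induct)
  case zero then show ?case using comb_zero by simp
next
  case (step g' d \<beta>)
  then have "comb (\<lambda>x. g' x * c x + \<beta> * (\<lambda>x. d x * c x) x)"
    using comb_add_char dual_mult by blast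
  then show ?case by (simp add: algebra_simps)
qed

lemma comb_scale: "comb g \<Longrightarrow> comb (\<lambda>x. \<gamma> * g x)"
proof (induction g rule: comb_induct)
  case zero then show ?case using comb_zero by simp
next
  case (step g' c \<beta>)
  then have "comb (\<lambda>x. \<gamma> * g' x + (\<gamma> * \<beta>) * c x)" using comb_add_char by blast
  then show ?case by (simp add: algebra_simps)
qed

lemma comb_mult:
  assumes g: "comb g" and h: "comb h"
  shows "comb (\<lambda>x. g x * h x)"
  using h
proof (induction h rule: comb_induct)
  case zero then show ?case using comb_zero by simp
next
  case (step g' c \<beta>)
  have a: "comb (\<lambda>x. \<beta> * (g x * c x))" using comb_mult_char comb_scale step g by blast
  have "comb (\<lambda>x. g x * g' x + \<beta> * (g x * c x))"
    using comb_add[OF step(1) a] .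
  then show ?case by (simp add: algebra_simps)
qed

lemma comb_cnj: "comb g \<Longrightarrow> comb (\<lambda>x. cnj (g x))"
proof (induction g rule: comb_induct)
  case zero then show ?case using comb_zero by simp
next
  case (step g' c \<beta>)
  then have "comb (\<lambda>x. cnj (g' x) + cnj \<beta> * cnj (c x))"
    using comb_add_char[OF _ dual_cnj] by blast
  then show ?case by simp
qed

lemma comb_Re: "comb g \<Longrightarrow> comb (\<lambda>x. complex_of_real (Re (g x)))"
proof -
  assume g: "comb g"
  have "comb (\<lambda>x. (1/2) * (g x + cnj (g x)))"
    using comb_scale[OF comb_add[OF g comb_cnj[OF g]]] .
  moreover have "\<And>z. (1/2) * (z + cnj z) = complex_of_real (Re z)"
    by (simp add: complex_add_cnj)
  ultimately show ?thesis by simp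
qed



lemma Rep_phi: "Rep_pfun (phi x) = alpha x"
  by (simp add: phi_def Abs_pfun_inverse)

lemma SW_approx:
  fixes S :: "'a::topological_ab_group_add set" and f :: "('a \<Rightarrow> complex, complex) pfun \<Rightarrow> real"
  assumes S: "compact S" and f: "continuous_on (phi ` S) f" and e: "0 < e"
  shows "\<exists>h. comb h \<and> (\<forall>x\<in>S. \<bar>f (phi x) - Re (h x)\<bar> < e)"
proof -
  define P where "P g \<longleftrightarrow> continuous_on (phi ` S) g \<and> (\<exists>h. comb h \<and> (\<forall>x\<in>S. g (phi x) = Re (h x)))"
    for g :: "('a \<Rightarrow> complex, complex) pfun \<Rightarrow> real"
  have "\<exists>g. P g \<and> (\<forall>y\<in>phi ` S. \<bar>f y - g y\<bar> < e)"
  proof (rule Stone_Weierstrass_HOL[of "phi ` S" P f e])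
    show "compact (phi ` S)" using compact_continuous_image[OF continuous_phi S] .
  next
    fix c :: real
    have "comb (\<lambda>x. complex_of_real c)" by (rule comb_const)
    then show "P (\<lambda>x. c)" unfolding P_def by (intro conjI continuous_on_const exI[of _ "\<lambda>x. complex_of_real c"]) auto
  next
    fix g assume "P g" then show "continuous_on (phi ` S) g" by (simp add: P_def)
  next
    fix g1 g2 assume "P g1 \<and> P g2"
    then obtain h1 h2 where c: "continuous_on (phi ` S) g1" "continuous_on (phi ` S) g2"
      and h: "comb h1" "comb h2" "\<forall>x\<in>S. g1 (phi x) = Re (h1 x)" "\<forall>x\<in>S. g2 (phi x) = Re (h2 x)"
      unfolding P_def by blast
    show "P (\<lambda>x. g1 x + g2 x)" unfolding P_def
      using c h comb_add[OF h(1,2)] by (intro conjI continuous_on_add exI[of _ "\<lambda>x. h1 x + h2 x"]) auto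
  next
    fix g1 g2 assume "P g1 \<and> P g2"
    then obtain h1 h2 where c: "continuous_on (phi ` S) g1" "continuous_on (phi ` S) g2"
      and h: "comb h1" "comb h2" "\<forall>x\<in>S. g1 (phi x) = Re (h1 x)" "\<forall>x\<in>S. g2 (phi x) = Re (h2 x)"
      unfolding P_def by blast
    have cm: "comb (\<lambda>x. (1/2) * (h1 x * h2 x + h1 x * cnj (h2 x)))"
      by (intro comb_scale comb_add comb_mult comb_cnj h(1,2))
    have id: "Re ((1/2) * (u * v + u * cnj v)) = Re u * Re v" for u v :: complex
    proof -
      have "(1/2) * (u * v + u * cnj v) = u * (v + cnj v) / 2" by (simp add: algebra_simps)
      also have "\<dots> = u * complex_of_real (Re v)" using complex_add_cnj[of v] by simp
      finally have "(1/2) * (u * v + u * cnj v) = u * complex_of_real (Re v)" .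
      then show ?thesis by simp
    qed
    show "P (\<lambda>x. g1 x * g2 x)" unfolding P_def
      using c h cm id by (intro conjI continuous_on_mult exI[of _ "\<lambda>x. (1/2) * (h1 x * h2 x + h1 x * cnj (h2 x))"]) auto
  next
    fix y1 y2 assume "y1 \<in> phi ` S \<and> y2 \<in> phi ` S \<and> y1 \<noteq> y2"
    then obtain a b where ab: "y1 = phi a" "y2 = phi b" "a \<in> S" "b \<in> S" "phi a \<noteq> phi b" by blast
    have "alpha a \<noteq> alpha b"
    proof
      assume "alpha a = alpha b"
      then have "phi a = phi b" by (simp add: phi_def)
      with ab(5) show False by simp
    qed
    then obtain c where "alpha a c \<noteq> alpha b c" by (auto simp: fun_eq_iff)
    then have cd: "c \<in> dual" and cab: "c a \<noteq> c b" by (auto simp: alpha_def split: if_splits)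
    have cont: "continuous_on (phi ` S) (\<lambda>y. Rep_pfun y c)" by (rule continuous_Rep_pfun_coord)
    show "\<exists>g. P g \<and> g y1 \<noteq> g y2"
    proof (cases "Re (c a) = Re (c b)")
      case False
      have "P (\<lambda>y. Re (Rep_pfun y c))" unfolding P_def
      proof (intro conjI exI[of _ "\<lambda>x. 1 * c x"])
        show "continuous_on (phi ` S) (\<lambda>y. Re (Rep_pfun y c))" using cont by (intro continuous_intros)
        show "comb (\<lambda>x. 1 * c x)" using comb_char[OF cd] .
      qed (simp add: Rep_phi alpha_app cd)
      then show ?thesis using False ab by (intro exI[of _ "\<lambda>y. Re (Rep_pfun y c)"]) (simp add: Rep_phi alpha_app cd)
    next
      case True
      then have Im: "Im (c a) \<noteq> Im (c b)" using cab complex_eqI by blast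
      have "P (\<lambda>y. Re (- \<i> * Rep_pfun y c))" unfolding P_def
      proof (intro conjI exI[of _ "\<lambda>x. (- \<i>) * c x"])
        show "continuous_on (phi ` S) (\<lambda>y. Re (- \<i> * Rep_pfun y c))" using cont by (intro continuous_intros)
        show "comb (\<lambda>x. (- \<i>) * c x)" using comb_char[OF cd] .
      qed (simp add: Rep_phi alpha_app cd)
      then show ?thesis using Im ab by (intro exI[of _ "\<lambda>y. Re (- \<i> * Rep_pfun y c)"]) (simp add: Rep_phi alpha_app cd)
    qed
  qed (use f e in auto)
  then obtain g h where "comb h" "\<forall>x\<in>S. g (phi x) = Re (h x)" "\<forall>y\<in>phi ` S. \<bar>f y - g y\<bar> < e"
    unfolding P_def by blast
  then show ?thesis by (intro exI[of _ h]) auto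
qed



lemma avg_step:
  fixes S K :: "'a::ab_group_add set" and e :: "nat \<Rightarrow> 'a \<Rightarrow> complex"
    and b :: "nat \<Rightarrow> complex" and h0 :: "'a \<Rightarrow> complex"
  assumes SK: "\<And>x k. x \<in> S \<Longrightarrow> k \<in> K \<Longrightarrow> x + k \<in> S"
    and eK: "\<And>i x k. x \<in> S \<Longrightarrow> k \<in> K \<Longrightarrow> e i (x + k) = e i x * e i k"
    and h0K: "\<And>x k. x \<in> S \<Longrightarrow> k \<in> K \<Longrightarrow> h0 (x + k) = h0 x"
    and approx: "\<forall>x\<in>S. cmod (h0 x - (\<Sum>i<n. b i * e i x)) \<le> \<epsilon>"
    and k0: "k0 \<in> K" and N: "N > 0"
  shows "\<forall>x\<in>S. cmod (h0 x - (\<Sum>i<n. (b i * ((1 / of_nat N) * (\<Sum>j<N. e i k0 ^ j))) * e i x)) \<le> \<epsilon>"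
proof
  fix x assume x: "x \<in> S"
  define t where "t j = (\<Sum>l<(j::nat). k0)" for j
  have tj: "x + t j \<in> S \<and> (\<forall>i. e i (x + t j) = e i x * e i k0 ^ j) \<and> h0 (x + t j) = h0 x" for j
  proof (induction j)
    case 0 then show ?case using x by (simp add: t_def)
  next
    case (Suc j)
    have eq: "x + t (Suc j) = (x + t j) + k0" by (simp add: t_def add.assoc)
    show ?case unfolding eq using Suc SK eK h0K k0 by (auto simp: mult.assoc)
  qed
  have "(\<Sum>j<N. (h0 (x + t j) - (\<Sum>i<n. b i * e i (x + t j))))
      = (\<Sum>j<N. (h0 x - (\<Sum>i<n. b i * e i x * e i k0 ^ j)))"
    using tj by (intro sum.cong) (auto simp: mult.assoc)
  also have "\<dots> = of_nat N * h0 x - (\<Sum>j<N. \<Sum>i<n. b i * e i x * e i k0 ^ j)"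
    by (simp add: sum_subtractf)
  also have "(\<Sum>j<N. \<Sum>i<n. b i * e i x * e i k0 ^ j) = (\<Sum>i<n. \<Sum>j<N. b i * e i x * e i k0 ^ j)"
    by (rule sum.swap)
  also have "\<dots> = (\<Sum>i<n. b i * e i x * (\<Sum>j<N. e i k0 ^ j))"
    by (simp add: sum_distrib_left)
  finally have eq: "(\<Sum>j<N. (h0 (x + t j) - (\<Sum>i<n. b i * e i (x + t j))))
      = of_nat N * h0 x - (\<Sum>i<n. b i * e i x * (\<Sum>j<N. e i k0 ^ j))" .
  have "h0 x - (\<Sum>i<n. (b i * ((1 / of_nat N) * (\<Sum>j<N. e i k0 ^ j))) * e i x)
      = (1 / of_nat N) * (of_nat N * h0 x - (\<Sum>i<n. b i * e i x * (\<Sum>j<N. e i k0 ^ j)))"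
    using N by (simp add: right_diff_distrib sum_distrib_left algebra_simps)
  also have "\<dots> = (1 / of_nat N) * (\<Sum>j<N. (h0 (x + t j) - (\<Sum>i<n. b i * e i (x + t j))))"
    by (simp add: eq)
  finally have "cmod (h0 x - (\<Sum>i<n. (b i * ((1 / of_nat N) * (\<Sum>j<N. e i k0 ^ j))) * e i x))
     = (1 / real N) * cmod (\<Sum>j<N. (h0 (x + t j) - (\<Sum>i<n. b i * e i (x + t j))))"
    by (simp add: norm_mult norm_divide)
  also have "\<dots> \<le> (1 / real N) * (\<Sum>j<N. \<epsilon>)"
  proof (intro mult_left_mono)
    have "cmod (\<Sum>j<N. (h0 (x + t j) - (\<Sum>i<n. b i * e i (x + t j))))
        \<le> (\<Sum>j<N. cmod (h0 (x + t j) - (\<Sum>i<n. b i * e i (x + t j))))" by (rule norm_sum)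
    also have "\<dots> \<le> (\<Sum>j<N. \<epsilon>)"
    proof (rule sum_mono)
      fix j show "cmod (h0 (x + t j) - (\<Sum>i<n. b i * e i (x + t j))) \<le> \<epsilon>"
        by (rule bspec[OF approx conjunct1[OF tj[of j]]])
    qed
    finally show "cmod (\<Sum>j<N. (h0 (x + t j) - (\<Sum>i<n. b i * e i (x + t j)))) \<le> (\<Sum>j<N. \<epsilon>)" .
  qed simp
  also have "\<dots> = \<epsilon>" using N by simp
  finally show "cmod (h0 x - (\<Sum>i<n. (b i * ((1 / of_nat N) * (\<Sum>j<N. e i k0 ^ j))) * e i x)) \<le> \<epsilon>" .
qed

lemma avg_le1:
  assumes "cmod z = 1" "N > 0"
  shows "cmod ((1 / of_nat N) * (\<Sum>j<N. z ^ j)) \<le> 1"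
proof -
  have "cmod (\<Sum>j<N. z ^ j) \<le> (\<Sum>j<N. cmod (z ^ j))" by (rule norm_sum)
  also have "\<dots> = real N" using assms by (simp add: norm_power)
  finally show ?thesis using assms by (simp add: norm_mult norm_divide field_simps)
qed

lemma avg_small:
  assumes "cmod z = 1" "z \<noteq> 1" "N > 0"
  shows "cmod ((1 / of_nat N) * (\<Sum>j<N. z ^ j)) \<le> 2 / (real N * cmod (z - 1))"
proof -
  have zpos: "cmod (z - 1) > 0" using assms(2) by simp
  have "(\<Sum>j<N. z ^ j) = (1 - z ^ N) / (1 - z)" using assms(2) by (simp add: sum_gp_strict)
  then have s: "cmod (\<Sum>j<N. z ^ j) = cmod (1 - z ^ N) / cmod (z - 1)"
    by (simp add: norm_divide norm_minus_commute)
  have "cmod (1 - z ^ N) \<le> 2"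
    using norm_triangle_ineq4[of 1 "z ^ N"] assms(1) by (simp add: norm_power)
  then have "cmod (\<Sum>j<N. z ^ j) \<le> 2 / cmod (z - 1)"
    unfolding s using zpos by (intro divide_right_mono) auto
  then have "cmod (\<Sum>j<N. z ^ j) / real N \<le> (2 / cmod (z - 1)) / real N"
    using assms(3) by (intro divide_right_mono) auto
  then show ?thesis by (simp add: norm_mult norm_divide ac_simps)
qed

lemma averaging:
  fixes S K :: "'a::ab_group_add set" and e :: "nat \<Rightarrow> 'a \<Rightarrow> complex"
    and b :: "nat \<Rightarrow> complex" and h0 :: "'a \<Rightarrow> complex"
  assumes SK: "\<And>x k. x \<in> S \<Longrightarrow> k \<in> K \<Longrightarrow> x + k \<in> S"
    and eK: "\<And>i x k. x \<in> S \<Longrightarrow> k \<in> K \<Longrightarrow> e i (x + k) = e i x * e i k"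
    and enorm: "\<And>i k. k \<in> K \<Longrightarrow> cmod (e i k) = 1"
    and h0K: "\<And>x k. x \<in> S \<Longrightarrow> k \<in> K \<Longrightarrow> h0 (x + k) = h0 x"
    and approx: "\<forall>x\<in>S. cmod (h0 x - (\<Sum>i<n. b i * e i x)) \<le> \<epsilon>"
    and \<delta>: "\<delta> > 0"
  shows "\<exists>b'. (\<forall>x\<in>S. cmod (h0 x - (\<Sum>i<n. b' i * e i x)) \<le> \<epsilon>)
    \<and> (\<forall>i<n. (\<forall>k\<in>K. e i k = 1) \<longrightarrow> b' i = b i)
    \<and> (\<forall>i<n. (\<exists>k\<in>K. e i k \<noteq> 1) \<longrightarrow> cmod (b' i) \<le> \<delta>)"
proof -
  have "\<exists>b'. (\<forall>x\<in>S. cmod (h0 x - (\<Sum>i<n. b' i * e i x)) \<le> \<epsilon>)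
    \<and> (\<forall>i<n. cmod (b' i) \<le> cmod (b i))
    \<and> (\<forall>i<n. (\<forall>k\<in>K. e i k = 1) \<longrightarrow> b' i = b i)
    \<and> (\<forall>i<m. (\<exists>k\<in>K. e i k \<noteq> 1) \<longrightarrow> cmod (b' i) \<le> \<delta>)" for m
  proof (induction m)
    case 0
    then show ?case using approx by (intro exI[of _ b]) auto
  next
    case (Suc m)
    then obtain b' where b'1: "\<forall>x\<in>S. cmod (h0 x - (\<Sum>i<n. b' i * e i x)) \<le> \<epsilon>"
      and b'2: "\<forall>i<n. cmod (b' i) \<le> cmod (b i)"
      and b'3: "\<forall>i<n. (\<forall>k\<in>K. e i k = 1) \<longrightarrow> b' i = b i"
      and b'4: "\<forall>i<m. (\<exists>k\<in>K. e i k \<noteq> 1) \<longrightarrow> cmod (b' i) \<le> \<delta>" by blast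
    show ?case
    proof (cases "\<exists>k\<in>K. e m k \<noteq> 1")
      case False
      then show ?thesis using b'1 b'2 b'3 b'4
        by (intro exI[of _ b']) (auto simp: less_Suc_eq)
    next
      case True
      then obtain k0 where k0: "k0 \<in> K" "e m k0 \<noteq> 1" by blast
      define z where "z = e m k0"
      have z1: "cmod z = 1" using enorm k0 by (simp add: z_def)
      have zne: "z \<noteq> 1" using k0 by (simp add: z_def)
      have zpos: "cmod (z - 1) > 0" using zne by simp
      define N where "N = nat \<lceil>2 * cmod (b' m) / (\<delta> * cmod (z - 1))\<rceil> + 1"
      have N0: "N > 0" by (simp add: N_def)
      have Nge: "2 * cmod (b' m) / (\<delta> * cmod (z - 1)) \<le> real N"
        unfolding N_def by linarith
      define avg where "avg i = (1 / of_nat N) * (\<Sum>j<N. e i k0 ^ j)" for i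
      define b'' where "b'' i = b' i * avg i" for i
      have avg1: "cmod (avg i) \<le> 1" for i
        unfolding avg_def using avg_le1[OF enorm[OF k0(1)] N0] .
      have avgm: "cmod (avg m) \<le> 2 / (real N * cmod (z - 1))"
        unfolding avg_def z_def[symmetric] using avg_small[OF z1 zne N0] .
      have "\<forall>x\<in>S. cmod (h0 x - (\<Sum>i<n. b'' i * e i x)) \<le> \<epsilon>"
        unfolding b''_def avg_def by (rule avg_step[OF SK eK h0K b'1 k0(1) N0])
      moreover have "\<forall>i<n. cmod (b'' i) \<le> cmod (b i)"
      proof (intro allI impI)
        fix i assume "i < n"
        have "cmod (b'' i) \<le> cmod (b' i) * 1" unfolding b''_def norm_mult
          using avg1 by (intro mult_left_mono) auto
        moreover have "cmod (b' i) \<le> cmod (b i)" using b'2 \<open>i < n\<close> by blast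
        ultimately show "cmod (b'' i) \<le> cmod (b i)" by linarith
      qed
      moreover have "\<forall>i<n. (\<forall>k\<in>K. e i k = 1) \<longrightarrow> b'' i = b i"
      proof (intro allI impI)
        fix i assume "i < n" "\<forall>k\<in>K. e i k = 1"
        then have "e i k0 = 1" using k0 by blast
        then have "avg i = 1" using N0 by (simp add: avg_def)
        then show "b'' i = b i" using b'3 \<open>i < n\<close> \<open>\<forall>k\<in>K. e i k = 1\<close> by (simp add: b''_def)
      qed
      moreover have "\<forall>i<Suc m. (\<exists>k\<in>K. e i k \<noteq> 1) \<longrightarrow> cmod (b'' i) \<le> \<delta>"
      proof (intro allI impI)
        fix i assume i: "i < Suc m" "\<exists>k\<in>K. e i k \<noteq> 1"
        show "cmod (b'' i) \<le> \<delta>"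
        proof (cases "i = m")
          case True
          have "cmod (b'' m) \<le> cmod (b' m) * (2 / (real N * cmod (z - 1)))"
            unfolding b''_def norm_mult using avgm by (intro mult_left_mono) auto
          also have "\<dots> \<le> \<delta>"
          proof -
            have "2 * cmod (b' m) \<le> real N * (\<delta> * cmod (z - 1))"
              using Nge zpos \<delta> by (simp add: field_simps)
            then show ?thesis using N0 zpos \<delta> by (simp add: field_simps)
          qed
          finally show ?thesis using True by simp
        next
          case False
          then have "i < m" using i by simp
          have "cmod (b'' i) \<le> cmod (b' i) * 1" unfolding b''_def norm_mult
            using avg1 by (intro mult_left_mono) auto
          then show ?thesis using b'4 \<open>i < m\<close> i by fastforce
        qed
      qed
      ultimately show ?thesis by blast
    qed
  qed
  from this[of n] show ?thesis by blast
qed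

lemma one_in_Lambda1: "1 \<in> Lambda1"
  unfolding Lambda1_def by (rule image_eqI[of _ _ 0]) auto

lemma Lambda1_Re:
  assumes "w \<in> Lambda1" shows "Re w \<ge> 0"
proof -
  obtain x where x: "w = cis (2 * pi * x)" "-(1/4) \<le> x" "x \<le> 1/4"
    using assms unfolding Lambda1_def by auto
  have "pi * (4 * x + 1) \<ge> 0" "pi * (1 - 4 * x) \<ge> 0" using x by (intro mult_nonneg_nonneg; simp)+
  then have "-(pi/2) \<le> 2 * pi * x" "2 * pi * x \<le> pi/2" by (simp_all add: algebra_simps)
  then show ?thesis using x(1) cos_ge_zero by simp
qed

lemma pow_Lambda1:
  fixes z :: complex
  assumes z1: "cmod z = 1" and all: "\<And>n. n \<ge> 1 \<Longrightarrow> z ^ n \<in> Lambda1"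
  shows "z = 1"
proof (rule ccontr)
  assume zne: "z \<noteq> 1"
  define \<theta> where "\<theta> = Arg z"
  have z0: "z \<noteq> 0" using z1 by auto
  have zc: "z = cis \<theta>" using cis_Arg[OF z0] z1 by (simp add: \<theta>_def sgn_div_norm)
  have "\<theta> \<noteq> 0" using zne zc by auto
  define t where "t = \<bar>\<theta>\<bar>"
  have t0: "t > 0" using \<open>\<theta> \<noteq> 0\<close> by (simp add: t_def)
  have tpi: "t \<le> pi" using Arg_bounded[of z] by (simp add: t_def \<theta>_def abs_le_iff)
  have Re_pow: "Re (z ^ n) = cos (real n * t)" for n
  proof -
    have "Re (z ^ n) = cos (real n * \<theta>)" by (simp only: zc Complex.DeMoivre) simp
    also have "\<dots> = cos (real n * t)"
      by (cases "\<theta> \<ge> 0") (simp_all add: t_def)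
    finally show ?thesis .
  qed
  obtain n :: nat where n1: "n \<ge> 1" and nt: "pi/2 < real n * t" "real n * t < 3 * pi / 2"
  proof (cases "t > pi/2")
    case True
    have "t < 3 * pi / 2" using tpi pi_gt_zero by linarith
    then show ?thesis using True by (intro that[of 1]) auto
  next
    case False
    define q where "q = pi / (2 * t)"
    have q0: "q \<ge> 0" using t0 by (simp add: q_def)
    define n where "n = nat \<lfloor>q\<rfloor> + 1"
    have rn: "real n = of_int \<lfloor>q\<rfloor> + 1" using q0 by (simp add: n_def)
    have "q < real n" using rn by linarith
    then have "q * t < real n * t" using t0 by (simp add: mult_strict_right_mono)
    moreover have "q * t = pi / 2" using t0 by (simp add: q_def)
    ultimately have A: "pi / 2 < real n * t" by simp
    have "real n \<le> q + 1" using rn by linarith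
    then have "real n * t \<le> (q + 1) * t" using t0 by (simp add: mult_right_mono)
    moreover have "(q + 1) * t = pi/2 + t" using t0 by (simp add: q_def field_simps)
    ultimately have B: "real n * t < 3 * pi / 2" using False pi_gt_zero by linarith
    show ?thesis using A B by (intro that[of n]) (auto simp: n_def)
  qed
  have "cos (real n * t) < 0" using cos_lt_zero_pi nt by blast
  moreover have "Re (z ^ n) \<ge> 0" using Lambda1_Re[OF all[OF n1]] .
  ultimately show False using Re_pow by simp
qed



lemma dual_zero: "c \<in> dual \<Longrightarrow> c 0 = 1"
proof -
  assume c: "c \<in> dual"
  have "c 0 = c 0 * c 0" using dualD(3)[OF c, of 0 0] by simp
  moreover have "c 0 \<noteq> 0" using dualD(2)[OF c, of 0] by auto
  ultimately show ?thesis by (metis mult_cancel_right1)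
qed

lemma comb_unfold:
  assumes "comb h"
  obtains n :: nat and b e where "\<forall>i<n. e i \<in> dual" "h = (\<lambda>x. \<Sum>i<n. b i * e i x)"
  using assms unfolding comb_def by blast

lemma sum_small:
  fixes b :: "nat \<Rightarrow> complex"
  assumes "\<forall>i<n. cmod (b i) \<le> \<delta>"
  shows "(\<Sum>i<n. cmod (b i)) \<le> real n * \<delta>"
proof -
  have "(\<Sum>i<n. cmod (b i)) \<le> (\<Sum>i<n. \<delta>)" using assms by (intro sum_mono) auto
  then show ?thesis by simp
qed

lemma embedded:
  fixes K :: "'a::topological_ab_group_add set"
  assumes inj: "inj (alpha :: 'a \<Rightarrow> ('a \<Rightarrow> complex) \<Rightarrow> complex)"
    and sg: "is_subgroup K" and cK: "compact K"
  shows "dually_embedded K"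
  unfolding dually_embedded_def
proof (intro allI impI)
  fix psi :: "'a \<Rightarrow> complex"
  assume ch: "is_char K psi"
  have K0: "0 \<in> K" and Kadd: "\<And>x y. x \<in> K \<Longrightarrow> y \<in> K \<Longrightarrow> x + y \<in> K"
    using sg by (auto simp: is_subgroup_def)
  have chc: "continuous_on K psi" and chn: "\<And>x. x \<in> K \<Longrightarrow> cmod (psi x) = 1"
    and chh: "\<And>x y. x \<in> K \<Longrightarrow> y \<in> K \<Longrightarrow> psi (x + y) = psi x * psi y"
    using ch by (auto simp: is_char_def circleT_def)
  show "\<exists>d\<in>dual. \<forall>x\<in>K. d x = psi x"
  proof (rule ccontr)
    assume noext: "\<not> (\<exists>d\<in>dual. \<forall>x\<in>K. d x = psi x)"
    have injphi: "inj (phi :: 'a \<Rightarrow> _)" using phi_inj[OF inj] .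
    define g where "g = inv_into K phi"
    have g: "\<forall>x\<in>K. g (phi x) = x" using injphi by (simp add: g_def inv_into_f_f inj_on_subset)
    have gc: "continuous_on (phi ` K) g"
      by (rule continuous_on_inv[OF continuous_phi cK g])
    have gK: "g ` (phi ` K) \<subseteq> K" using g by auto
    have cg: "continuous_on (phi ` K) (\<lambda>y. psi (g y))"
      by (rule continuous_on_compose2[OF chc gc gK])
    have c1: "continuous_on (phi ` K) (\<lambda>y. Re (psi (g y)))" using cg by (intro continuous_intros)
    have c2: "continuous_on (phi ` K) (\<lambda>y. Im (psi (g y)))" using cg by (intro continuous_intros)
    obtain h1 where h1: "comb h1" "\<forall>x\<in>K. \<bar>Re (psi (g (phi x))) - Re (h1 x)\<bar> < 1/8"
      using SW_approx[OF cK c1, of "1/8"] by auto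
    obtain h2 where h2: "comb h2" "\<forall>x\<in>K. \<bar>Im (psi (g (phi x))) - Re (h2 x)\<bar> < 1/8"
      using SW_approx[OF cK c2, of "1/8"] by auto
    define H where "H x = complex_of_real (Re (h1 x)) + \<i> * complex_of_real (Re (h2 x))" for x
    have cH: "comb H" unfolding H_def
      by (intro comb_add comb_scale comb_Re h1(1) h2(1))
    have Happ: "cmod (psi x - H x) \<le> 1/4" if x: "x \<in> K" for x
    proof -
      have "cmod (psi x - H x) \<le> \<bar>Re (psi x - H x)\<bar> + \<bar>Im (psi x - H x)\<bar>" by (rule cmod_le)
      also have "\<dots> = \<bar>Re (psi x) - Re (h1 x)\<bar> + \<bar>Im (psi x) - Re (h2 x)\<bar>" by (simp add: H_def)
      also have "\<dots> \<le> 1/4" using h1(2) h2(2) g x by fastforce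
      finally show ?thesis .
    qed
    obtain n :: nat and b e where ne: "\<forall>i<n. e i \<in> dual" and Hs: "H = (\<lambda>x. \<Sum>i<n. b i * e i x)"
      using comb_unfold[OF cH] by blast
    define \<eta> where "\<eta> i x = e i x * cnj (psi x)" for i x
    define \<delta> :: real where "\<delta> = 1 / (8 * (real n + 1))"
    have \<delta>0: "\<delta> > 0" by (simp add: \<delta>_def)
    have eone: "e i x * cnj (e i x) = 1" if "i < n" for i x
      using dualD(2)[of "e i" x] ne that by (simp add: complex_norm_square[symmetric])
    have cone: "psi x * cnj (psi x) = 1" if "x \<in> K" for x
      using chn[OF that] by (simp add: complex_norm_square[symmetric])
    have approx: "\<forall>x\<in>K. cmod ((\<lambda>x. 1) x - (\<Sum>i<n. b i * \<eta> i x)) \<le> 1/4"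
    proof
      fix x assume x: "x \<in> K"
      have "1 - (\<Sum>i<n. b i * \<eta> i x) = cnj (psi x) * (psi x - H x)"
        using cone[OF x] by (simp add: Hs \<eta>_def sum_distrib_left algebra_simps)
      then have "cmod (1 - (\<Sum>i<n. b i * \<eta> i x)) = cmod (psi x - H x)"
        using chn[OF x] by (simp add: norm_mult)
      then show "cmod ((\<lambda>x. 1) x - (\<Sum>i<n. b i * \<eta> i x)) \<le> 1/4" using Happ[OF x] by simp
    qed
    have eta_norm: "cmod (\<eta> i k) = 1" if "k \<in> K" "i < n" for i k
      using chn[OF that(1)] dualD(2)[of "e i" k] ne that by (simp add: \<eta>_def norm_mult)
    obtain b' where b'1: "\<forall>x\<in>K. cmod ((\<lambda>x. 1) x - (\<Sum>i<n. b' i * \<eta> i x)) \<le> 1/4"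
      and b'3: "\<forall>i<n. (\<exists>k\<in>K. \<eta> i k \<noteq> 1) \<longrightarrow> cmod (b' i) \<le> \<delta>"
    proof -
      define \<eta>' where "\<eta>' i = (if i < n then \<eta> i else (\<lambda>x. 1))" for i
      have a2: "\<forall>x\<in>K. cmod ((\<lambda>x. 1) x - (\<Sum>i<n. b i * \<eta>' i x)) \<le> 1/4"
        using approx by (simp add: \<eta>'_def)
      have "\<exists>b'. (\<forall>x\<in>K. cmod ((\<lambda>x. 1) x - (\<Sum>i<n. b' i * \<eta>' i x)) \<le> 1/4)
        \<and> (\<forall>i<n. (\<forall>k\<in>K. \<eta>' i k = 1) \<longrightarrow> b' i = b i)
        \<and> (\<forall>i<n. (\<exists>k\<in>K. \<eta>' i k \<noteq> 1) \<longrightarrow> cmod (b' i) \<le> \<delta>)"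
      proof (rule averaging[OF _ _ _ _ a2 \<delta>0])
        show "\<And>x k. x \<in> K \<Longrightarrow> k \<in> K \<Longrightarrow> x + k \<in> K" by (rule Kadd)
        show "\<eta>' i (x + k) = \<eta>' i x * \<eta>' i k" if "x \<in> K" "k \<in> K" for i x k
          using that ne chh[OF that] dualD(3)[of "e i" x k]
          by (auto simp: \<eta>'_def \<eta>_def algebra_simps)
        show "cmod (\<eta>' i k) = 1" if "k \<in> K" for i k
          using eta_norm[OF that] by (simp add: \<eta>'_def)
      qed simp
      then obtain b' where "\<forall>x\<in>K. cmod ((\<lambda>x. 1) x - (\<Sum>i<n. b' i * \<eta>' i x)) \<le> 1/4"
        "\<forall>i<n. (\<exists>k\<in>K. \<eta>' i k \<noteq> 1) \<longrightarrow> cmod (b' i) \<le> \<delta>" by blast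
      then show ?thesis using that[of b'] by (simp add: \<eta>'_def)
    qed
    have nontriv: "\<exists>k\<in>K. \<eta> i k \<noteq> 1" if "i < n" for i
    proof (rule ccontr)
      assume nt: "\<not> (\<exists>k\<in>K. \<eta> i k \<noteq> 1)"
      have "\<forall>k\<in>K. e i k = psi k"
      proof
        fix k assume k: "k \<in> K"
        with nt have A: "e i k * cnj (psi k) = 1" by (simp add: \<eta>_def)
        have "e i k = e i k * (psi k * cnj (psi k))" using cone[OF k] by simp
        also have "\<dots> = (e i k * cnj (psi k)) * psi k" by (simp add: algebra_simps)
        also have "\<dots> = psi k" using A by simp
        finally show "e i k = psi k" .
      qed
      then show False using noext ne that by blast
    qed
    have small: "\<forall>i<n. cmod (b' i) \<le> \<delta>" using b'3 nontriv by blast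
    have "cmod (\<Sum>i<n. b' i * \<eta> i 0) \<le> (\<Sum>i<n. cmod (b' i * \<eta> i 0))" by (rule norm_sum)
    also have "\<dots> = (\<Sum>i<n. cmod (b' i))" using eta_norm[OF K0] by (simp add: norm_mult)
    also have "\<dots> \<le> real n * \<delta>" using sum_small[OF small] .
    also have "\<dots> < 1/8" by (simp add: \<delta>_def field_simps)
    finally have s: "cmod (\<Sum>i<n. b' i * \<eta> i 0) < 1/8" .
    have "cmod (1 - (\<Sum>i<n. b' i * \<eta> i 0)) \<le> 1/4" using b'1 K0 by auto
    moreover have "1 \<le> cmod (1 - (\<Sum>i<n. b' i * \<eta> i 0)) + cmod (\<Sum>i<n. b' i * \<eta> i 0)"
      using norm_triangle_ineq[of "1 - (\<Sum>i<n. b' i * \<eta> i 0)" "\<Sum>i<n. b' i * \<eta> i 0"] by simp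
    ultimately show False using s by linarith
  qed
qed

lemma closedK:
  fixes K :: "'a::topological_ab_group_add set"
  assumes inj: "inj (alpha :: 'a \<Rightarrow> ('a \<Rightarrow> complex) \<Rightarrow> complex)"
    and sg: "is_subgroup K" and cK: "compact K"
  shows "dually_closed K"
  unfolding dually_closed_def
proof
  show "K \<subseteq> polar_l (polar_r K)" by (auto simp: polar_l_def polar_r_def)
next
  have K0: "0 \<in> K" and Kadd: "\<And>x y. x \<in> K \<Longrightarrow> y \<in> K \<Longrightarrow> x + y \<in> K"
    and Kneg: "\<And>x. x \<in> K \<Longrightarrow> - x \<in> K"
    using sg by (auto simp: is_subgroup_def)
  have Kiff: "x + k \<in> K \<longleftrightarrow> x \<in> K" if "k \<in> K" for x k
  proof
    assume "x + k \<in> K"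
    then have "(x + k) + (- k) \<in> K" using Kadd Kneg that by blast
    then show "x \<in> K" by simp
  qed (use Kadd that in blast)
  show "polar_l (polar_r K) \<subseteq> K"
  proof
    fix a assume a: "a \<in> polar_l (polar_r K)"
    show "a \<in> K"
    proof (rule ccontr)
      assume aK: "a \<notin> K"
      have triv: "c a = 1" if c: "c \<in> dual" "\<forall>k\<in>K. c k = 1" for c
      proof (rule pow_Lambda1)
        show "cmod (c a) = 1" using dualD(2)[OF c(1)] .
        fix m :: nat assume "m \<ge> 1"
        have "(\<lambda>x. c x ^ m) \<in> polar_r K"
          using dual_pow[OF c(1)] c(2) one_in_Lambda1 by (auto simp: polar_r_def)
        then show "c a ^ m \<in> Lambda1" using a by (auto simp: polar_l_def)
      qed
      define S where "S = K \<union> (\<lambda>k. a + k) ` K"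
      have cS: "compact S" unfolding S_def
        by (intro compact_Un cK compact_continuous_image[OF _ cK]) (intro continuous_intros)
      have injphi: "inj (phi :: 'a \<Rightarrow> _)" using phi_inj[OF inj] .
      have disj: "phi ` K \<inter> phi ` ((\<lambda>k. a + k) ` K) = {}"
      proof -
        have "K \<inter> (\<lambda>k. a + k) ` K = {}" using Kiff aK by (auto simp: add.commute)
        then show ?thesis using injphi by (simp add: image_Int[symmetric])
      qed
      define f where "f y = (if y \<in> phi ` K then 0 else (1::real))" for y
      have fc: "continuous_on (phi ` S) f"
      proof -
        have c1: "compact (phi ` K)" by (rule compact_continuous_image[OF continuous_phi cK])
        have c2: "compact (phi ` ((\<lambda>k. a + k) ` K))"
          by (intro compact_continuous_image[OF continuous_phi] compact_continuous_image[OF _ cK])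
             (intro continuous_intros)
        have "continuous_on (phi ` K \<union> phi ` ((\<lambda>k. a + k) ` K)) f"
        proof (rule continuous_on_closed_Un[OF compact_imp_closed[OF c1] compact_imp_closed[OF c2]])
          show "continuous_on (phi ` K) f"
            by (rule continuous_on_eq[OF continuous_on_const[of _ 0]]) (simp add: f_def)
          show "continuous_on (phi ` ((\<lambda>k. a + k) ` K)) f"
            by (rule continuous_on_eq[OF continuous_on_const[of _ 1]]) (use disj in \<open>auto simp: f_def\<close>)
        qed
        then show ?thesis by (simp add: S_def image_Un)
      qed
      obtain h where h: "comb h" "\<forall>x\<in>S. \<bar>f (phi x) - Re (h x)\<bar> < 1/4"
        using SW_approx[OF cS fc, of "1/4"] by auto
      define H where "H x = complex_of_real (Re (h x))" for x
      have cH: "comb H" unfolding H_def by (rule comb_Re[OF h(1)])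
      define h0 where "h0 x = (if x \<in> K then 0 else (1::complex))" for x
      have fh0: "complex_of_real (f (phi x)) = h0 x" for x
        using injphi by (simp add: f_def h0_def inj_image_mem_iff)
      obtain n :: nat and b e where ne: "\<forall>i<n. e i \<in> dual" and Hs: "H = (\<lambda>x. \<Sum>i<n. b i * e i x)"
        using comb_unfold[OF cH] by blast
      have approx: "\<forall>x\<in>S. cmod (h0 x - (\<Sum>i<n. b i * e i x)) \<le> 1/4"
      proof
        fix x assume "x \<in> S"
        have "h0 x - (\<Sum>i<n. b i * e i x) = complex_of_real (f (phi x) - Re (h x))"
          using fun_cong[OF Hs, of x] fh0[of x] by (simp add: H_def)
        then show "cmod (h0 x - (\<Sum>i<n. b i * e i x)) \<le> 1/4"
          using h(2) \<open>x \<in> S\<close> by (simp del: of_real_diff) (smt (verit))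
      qed
      define e' where "e' i = (if i < n then e i else (\<lambda>x. 1))" for i
      have e'd: "e' i \<in> dual" for i
      proof (cases "i < n")
        case True then show ?thesis using ne by (simp add: e'_def)
      next
        case False then show ?thesis using dual_one unfolding e'_def by simp
      qed
      have approx': "\<forall>x\<in>S. cmod (h0 x - (\<Sum>i<n. b i * e' i x)) \<le> 1/4"
        using approx by (simp add: e'_def)
      define \<delta> :: real where "\<delta> = 1 / (8 * (real n + 1))"
      have \<delta>0: "\<delta> > 0" by (simp add: \<delta>_def)
      have "\<exists>b'. (\<forall>x\<in>S. cmod (h0 x - (\<Sum>i<n. b' i * e' i x)) \<le> 1/4)
        \<and> (\<forall>i<n. (\<forall>k\<in>K. e' i k = 1) \<longrightarrow> b' i = b i)
        \<and> (\<forall>i<n. (\<exists>k\<in>K. e' i k \<noteq> 1) \<longrightarrow> cmod (b' i) \<le> \<delta>)"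
      proof (rule averaging[OF _ _ _ _ approx' \<delta>0])
        show "x + k \<in> S" if "x \<in> S" "k \<in> K" for x k
          using that Kadd by (auto simp: S_def add.assoc)
        show "e' i (x + k) = e' i x * e' i k" for i x k using dualD(3)[OF e'd] .
        show "cmod (e' i k) = 1" for i k using dualD(2)[OF e'd] .
        show "h0 (x + k) = h0 x" if "x \<in> S" "k \<in> K" for x k
          using Kiff[OF that(2)] by (simp add: h0_def)
      qed
      then obtain b' where b'1: "\<forall>x\<in>S. cmod (h0 x - (\<Sum>i<n. b' i * e' i x)) \<le> 1/4"
        and b'3: "\<forall>i<n. (\<exists>k\<in>K. e' i k \<noteq> 1) \<longrightarrow> cmod (b' i) \<le> \<delta>" by blast
      have S0: "0 \<in> S" and Sa: "a \<in> S" using K0 by (auto simp: S_def intro: image_eqI[of _ _ 0])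
      have trm: "cmod (b' i * e' i a - b' i * e' i 0) \<le> 2 * \<delta>" if "i < n" for i
      proof (cases "\<forall>k\<in>K. e' i k = 1")
        case True
        then have "e' i a = 1" using triv[OF e'd] by blast
        moreover have "e' i 0 = 1" using dual_zero[OF e'd] .
        ultimately show ?thesis using \<delta>0 by simp
      next
        case False
        then have bs: "cmod (b' i) \<le> \<delta>" using b'3 that by blast
        have "cmod (b' i * e' i a - b' i * e' i 0) = cmod (b' i) * cmod (e' i a - e' i 0)"
          by (simp add: norm_mult right_diff_distrib[symmetric])
        also have "cmod (e' i a - e' i 0) \<le> 2"
          using norm_triangle_ineq4[of "e' i a" "e' i 0"] dualD(2)[OF e'd] by simp
        then have "cmod (b' i) * cmod (e' i a - e' i 0) \<le> \<delta> * 2"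
          using bs \<delta>0 by (intro mult_mono) auto
        finally show ?thesis by simp
      qed
      define s0 where "s0 = (\<Sum>i<n. b' i * e' i 0)"
      define sa where "sa = (\<Sum>i<n. b' i * e' i a)"
      have "cmod (sa - s0) \<le> (\<Sum>i<n. cmod (b' i * e' i a - b' i * e' i 0))"
        unfolding sa_def s0_def sum_subtractf[symmetric] by (rule norm_sum)
      also have "\<dots> \<le> (\<Sum>i<n. 2 * \<delta>)" using trm by (intro sum_mono) auto
      also have "\<dots> < 1/4" by (simp add: \<delta>_def field_simps)
      finally have d: "cmod (sa - s0) < 1/4" .
      have e0: "cmod (0 - s0) \<le> 1/4" using b'1 S0 K0 by (auto simp: s0_def h0_def)
      have ea: "cmod (1 - sa) \<le> 1/4" using b'1 Sa aK by (auto simp: sa_def h0_def)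
      have "1 = cmod ((1 - sa) + (sa - s0) - (0 - s0))" by simp
      also have "\<dots> \<le> cmod ((1 - sa) + (sa - s0)) + cmod (0 - s0)" by (rule norm_triangle_ineq4)
      also have "\<dots> \<le> cmod (1 - sa) + cmod (sa - s0) + cmod (0 - s0)"
        using norm_triangle_ineq[of "1 - sa" "sa - s0"] by simp
      finally show False using d e0 ea by linarith
    qed
  qed
qed

theorem mainTheorem15:
  fixes K :: "'a::topological_ab_group_add set"
  assumes "inj (alpha :: 'a \<Rightarrow> ('a \<Rightarrow> complex) \<Rightarrow> complex)"
    and "is_subgroup K"
    and "compact K"
  shows "dually_closed K \<and> dually_embedded K"
  using closedK[OF assms] embedded[OF assms] by blast

end
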